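(* Let $\Omega=(a,b)$, let $S_h$ be a finite-dimensional subspace of $L^2(\Omega)$ and $\mathbf L_h:S_h\to S_h$ a linear operator that is self-adjoint and positive definite with respect to the $L^2(\Omega)$ inner product. Let $0<\gamma<1$, $K_\gamma>0$, $t>0$, $\sigma>0$, $\tau_1>0$, $N_1$ a positive integer and $\beta\in\mathbb R$. Set $z(p)=\sigma(ip+1)^2$ for $p\in\mathbb R$, $p_k=k\tau_1$, $z_k=z(p_k)$, $z_k'=z'(p_k)$, and for $v\in S_h$ define $$\Pi_{N_1}^{\gamma,\beta}v=\frac{t^{\beta-1}\tau_1}{2\pi i}\sum_{k=-N_1}^{N_1}z_k'e^{z_k}z_k^{\gamma-\beta}\left(z_k^{\gamma}\mathbf I+K_\gamma t^\gamma\mathbf L_h\right)^{-1}v,$$ with principal branches of the powers. If $\beta\ge\frac12$ and $\tau_1\le1$, then $$\left\|\Pi_{N_1}^{\gamma,\beta}v\right\|_{L^2(\Omega)}\lesssim\frac{t^{\beta-1}}{2\pi}e^{\sigma}\sigma^{-\beta+1}\|v\|_{L^2(\Omega)}\quad\text{for all }v\in S_h,$$ where the implicit constant is independent of $v$, $t$, $N_1$ and $\tau_1$.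
   Context: $A\lesssim B$ means $A\le CB$ for a constant $C$ not depending on the quantities indicated. *)

theory Defs
  imports "HOL-Analysis.Analysis"
begin

text \<open>The finite-dimensional subspace S_h of L^2(a,b), with the L^2 inner product,
  is represented through an L^2-orthonormal basis, i.e. as complex^'n with the
  standard Hermitian inner product (whose induced norm is the library norm on vectors).
  The operator L_h is then a matrix.\<close>

definition cinner_vec :: "complex^'n \<Rightarrow> complex^'n \<Rightarrow> complex" where
  "cinner_vec x y = (\<Sum>i\<in>UNIV. cnj (x$i) * y$i)"

definition self_adjoint_mat :: "complex^'n^'n \<Rightarrow> bool" where
  "self_adjoint_mat A \<longleftrightarrow> (\<forall>x y. cinner_vec x (A *v y) = cinner_vec (A *v x) y)"

definition pos_def_mat :: "complex^'n^'n \<Rightarrow> bool" where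
  "pos_def_mat A \<longleftrightarrow> (\<forall>x. x \<noteq> 0 \<longrightarrow> Re (cinner_vec x (A *v x)) > 0)"

definition zc :: "real \<Rightarrow> real \<Rightarrow> complex" where
  "zc \<sigma> p = of_real \<sigma> * (\<i> * of_real p + 1)^2"

text \<open>The quadrature operator Pi_{N1}^{gamma,beta}; powers are principal branches (powr = exp(w Ln z)).\<close>
definition Pi_op :: "real \<Rightarrow> real \<Rightarrow> complex^'n^'n \<Rightarrow> real \<Rightarrow> real \<Rightarrow> real \<Rightarrow> nat \<Rightarrow> real
    \<Rightarrow> complex^'n \<Rightarrow> complex^'n" where
  "Pi_op \<gamma> K L t \<sigma> \<tau>1 N1 \<beta> v =
     (of_real (t powr (\<beta> - 1) * \<tau>1) / (2 * of_real pi * \<i>)) *s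
     (\<Sum>k\<in>{-int N1..int N1}.
        (let p = real_of_int k * \<tau>1; z = zc \<sigma> p; z' = vector_derivative (zc \<sigma>) (at p)
         in (z' * exp z * z powr (of_real (\<gamma> - \<beta>))) *s
            (matrix_inv (mat (z powr of_real \<gamma>) + (K * t powr \<gamma>) *\<^sub>R L) *v v)))"

end

theory Submission
  imports Defs
begin
lemma zc_deriv: "vector_derivative (zc \<sigma>) (at p) = of_real \<sigma> * 2 * (\<i> * of_real p + 1) * \<i>"
proof -
  have h: "((\<lambda>x. (\<lambda>w. of_real \<sigma> * (\<i> * w + 1)^2) (of_real x)) has_vector_derivative
        (of_real \<sigma> * 2 * (\<i> * of_real p + 1) * \<i>)) (at p)"
    by (rule has_vector_derivative_real_field) (auto intro!: derivative_eq_intros simp: algebra_simps)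
  have e: "zc \<sigma> = (\<lambda>x. (\<lambda>w. of_real \<sigma> * (\<i> * w + 1)^2) (of_real x))"
    by (rule ext) (simp add: zc_def)
  show ?thesis unfolding e by (rule vector_derivative_at[OF h])
qed
lemma norm_zc: "norm (zc \<sigma> p) = \<bar>\<sigma>\<bar> * (1 + p^2)"
proof -
  have "norm (zc \<sigma> p) = sqrt ((\<sigma> * (1 + p^2))^2)"
    by (simp add: zc_def cmod_def power2_eq_square algebra_simps)
  then show ?thesis by (simp add: abs_mult)
qed
lemma Re_zc: "Re (zc \<sigma> p) = \<sigma> * (1 - p^2)"
  by (simp add: zc_def power2_eq_square algebra_simps)
lemma norm_zc': "norm (vector_derivative (zc \<sigma>) (at p)) = 2 * \<bar>\<sigma>\<bar> * sqrt (1 + p^2)"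
proof -
  have "norm (vector_derivative (zc \<sigma>) (at p)) = sqrt ((2*\<sigma>)^2 * (1 + p^2))"
    by (simp add: zc_deriv cmod_def power2_eq_square algebra_simps)
  then show ?thesis by (simp add: real_sqrt_mult)
qed
lemma zc_nz: "\<sigma> > 0 \<Longrightarrow> zc \<sigma> p \<noteq> 0"
  using norm_zc[of \<sigma> p] by (metis add_pos_nonneg mult_pos_pos norm_zero zero_less_abs_iff zero_le_power2 zero_less_one less_irrefl)
lemma powr_sector:
  fixes z :: complex and \<gamma> s :: real
  assumes z: "z \<noteq> 0" and g: "0 < \<gamma>" "\<gamma> < 1" and s: "s \<ge> 0"
  shows "sin (\<gamma> * pi) * norm (z powr of_real \<gamma>) \<le> norm (z powr of_real \<gamma> + of_real s)"
proof -
  define u where "u = of_real \<gamma> * Ln z"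
  define R where "R = exp (Re u)"
  define \<phi> where "\<phi> = Im u"
  have w: "z powr of_real \<gamma> = exp u" using z by (simp add: powr_def u_def)
  have R: "R > 0" by (simp add: R_def)
  have nw: "norm (exp u) = R" by (simp add: R_def)
  have phi: "\<phi> = \<gamma> * Im (Ln z)" by (simp add: \<phi>_def u_def)
  have "- pi < Im (Ln z)" "Im (Ln z) \<le> pi" using z by (simp_all add: mpi_less_Im_Ln Im_Ln_le_pi)
  then have aphi: "\<bar>\<phi>\<bar> \<le> \<gamma> * pi" using g unfolding phi
    by (auto simp: abs_mult abs_le_iff intro: mult_left_mono)
  have sg: "sin (\<gamma> * pi) \<le> 1" by simp
  have ReI: "Re (exp u + of_real s) = R * cos \<phi> + s" "Im (exp u + of_real s) = R * sin \<phi>"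
    by (simp_all add: Re_exp Im_exp R_def \<phi>_def)
  have nsq: "norm (exp u + of_real s) = sqrt ((R * cos \<phi> + s)^2 + (R * sin \<phi>)^2)"
    using ReI by (simp add: cmod_def)
  show ?thesis
  proof (cases "\<bar>\<phi>\<bar> \<le> pi/2")
    case True
    then have "cos \<phi> \<ge> 0" by (intro cos_ge_zero) auto
    then have "(R * cos \<phi> + s)^2 + (R * sin \<phi>)^2 \<ge> R^2"
    proof -
      assume c: "cos \<phi> \<ge> 0"
      have "(R * cos \<phi> + s)^2 \<ge> (R * cos \<phi>)^2" using c R s
        by (intro power_mono) auto
      moreover have "(R * cos \<phi>)^2 + (R * sin \<phi>)^2 = R^2"
        by (simp add: power_mult_distrib distrib_left[symmetric])
      ultimately show ?thesis by linarith
    qed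
    then have "R \<le> norm (exp u + of_real s)" unfolding nsq
      using R by (metis abs_of_pos real_le_rsqrt)
    then show ?thesis using sg R unfolding w nw
      by (smt (verit) mult_le_cancel_right2)
  next
    case False
    have gp: "\<gamma> * pi < pi" using g by simp
    have as: "\<bar>sin \<phi>\<bar> = sin \<bar>\<phi>\<bar>"
    proof (cases "\<phi> \<ge> 0")
      case True
      then have "sin \<phi> \<ge> 0" by (intro sin_ge_zero) (use aphi gp True in linarith)+
      then show ?thesis using True by simp
    next
      case False
      then have "sin (-\<phi>) \<ge> 0" by (intro sin_ge_zero) (use aphi gp False in linarith)+
      then show ?thesis using False by simp
    qed
    have "sin (pi - \<gamma> * pi) \<le> sin (pi - \<bar>\<phi>\<bar>)"
      by (intro sin_monotone_2pi_le) (use False aphi gp in linarith)+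
    then have ss: "sin (\<gamma> * pi) \<le> \<bar>sin \<phi>\<bar>" using as by simp
    have "\<bar>R * sin \<phi>\<bar> \<le> norm (exp u + of_real s)"
      using abs_Im_le_cmod ReI(2) by metis
    moreover have "sin (\<gamma> * pi) * R \<le> \<bar>R * sin \<phi>\<bar>"
      using ss R by (simp add: abs_mult mult.commute)
    ultimately show ?thesis unfolding w nw by linarith
  qed
qed

lemma cscaleR: "c *\<^sub>R (z::complex) = of_real c * z" by (simp add: scaleR_conv_of_real)

lemma Mv: "(mat w + c *\<^sub>R L) *v x = w *s x + c *\<^sub>R (L *v (x::complex^'n))"
proof -
  have "((mat w + c *\<^sub>R L) *v x)$i = (w *s x + c *\<^sub>R (L *v x))$i" for i
  proof -
    have "((mat w + c *\<^sub>R L) *v x)$i = (\<Sum>j\<in>UNIV. (if i = j then w else 0) * x$j) + (\<Sum>j\<in>UNIV. (of_real c * L$i$j) * x$j)"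
      by (simp add: matrix_vector_mult_def sum.distrib distrib_right mat_def cscaleR)
    also have "(\<Sum>j\<in>UNIV. (if i = j then w else 0) * x$j) = (\<Sum>j\<in>UNIV. if i = j then w * x$j else 0)"
      by (rule sum.cong) auto
    also have "(\<Sum>j\<in>UNIV. (of_real c * L$i$j) * x$j) = of_real c * (\<Sum>j\<in>UNIV. L$i$j * x$j)"
      by (simp add: sum_distrib_left mult.assoc)
    finally show ?thesis by (simp add: matrix_vector_mult_def cscaleR)
  qed
  then show ?thesis by (simp add: vec_eq_iff)
qed

lemma cinner_self: "cinner_vec x x = of_real ((norm x)^2)"
proof -
  have "cinner_vec x x = (\<Sum>i\<in>UNIV. of_real ((cmod (x$i))^2))"
    unfolding cinner_vec_def by (simp add: complex_norm_square[symmetric] mult.commute)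
  also have "\<dots> = of_real (\<Sum>i\<in>UNIV. (cmod (x$i))^2)" by simp
  also have "(\<Sum>i\<in>UNIV. (cmod (x$i))^2) = (norm x)^2"
    by (simp add: norm_vec_def L2_set_def sum_nonneg)
  finally show ?thesis .
qed

lemma cinner_cs: "cmod (cinner_vec x y) \<le> norm x * norm y"
proof -
  have "cmod (cinner_vec x y) \<le> (\<Sum>i\<in>UNIV. cmod (cnj (x$i) * y$i))"
    unfolding cinner_vec_def by (rule norm_sum)
  also have "\<dots> = (\<Sum>i\<in>UNIV. \<bar>cmod (x$i)\<bar> * \<bar>cmod (y$i)\<bar>)" by (simp add: norm_mult)
  also have "\<dots> \<le> L2_set (\<lambda>i. cmod (x$i)) UNIV * L2_set (\<lambda>i. cmod (y$i)) UNIV"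
    by (rule L2_set_mult_ineq)
  finally show ?thesis by (simp add: norm_vec_def)
qed

lemma cinner_lin: "cinner_vec x (w *s y + c *\<^sub>R z) = w * cinner_vec x y + of_real c * cinner_vec x z"
  unfolding cinner_vec_def
  by (simp add: cscaleR sum.distrib distrib_left sum_distrib_left algebra_simps)

lemma cinner_cnj: "cinner_vec y x = cnj (cinner_vec x y)"
  unfolding cinner_vec_def by (simp add: mult.commute)

lemma L_real:
  assumes "self_adjoint_mat L" "pos_def_mat L"
  shows "\<exists>r\<ge>0. cinner_vec x (L *v x) = of_real r"
proof -
  have "cinner_vec x (L *v x) = cnj (cinner_vec x (L *v x))"
    using assms(1) unfolding self_adjoint_mat_def by (metis cinner_cnj)
  then have im: "Im (cinner_vec x (L *v x)) = 0" by (metis cnj.sel(2) neg_equal_zero)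
  have "Re (cinner_vec x (L *v x)) \<ge> 0"
  proof (cases "x = 0")
    case True then show ?thesis by (simp add: cinner_vec_def)
  next
    case False then show ?thesis using assms(2) unfolding pos_def_mat_def by (simp add: less_imp_le)
  qed
  then show ?thesis using im by (intro exI[of _ "Re (cinner_vec x (L *v x))"]) (simp add: complex_eq_iff)
qed

lemma lower_bound:
  fixes L :: "complex^'n^'n"
  assumes sa: "self_adjoint_mat L" and pd: "pos_def_mat L" and c: "c > 0" and d: "\<delta> > 0"
    and wb: "\<And>s. s \<ge> 0 \<Longrightarrow> \<delta> * norm w \<le> norm (w + of_real s)"
  shows "\<delta> * norm w * norm x \<le> norm ((mat w + c *\<^sub>R L) *v x)"
proof (cases "x = 0")
  case True then show ?thesis by simp
next
  case False
  obtain r where r: "r \<ge> 0" "cinner_vec x (L *v x) = of_real r" using L_real[OF sa pd] by blast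
  have nx: "norm x > 0" using False by simp
  define s where "s = c * r / (norm x)^2"
  have s: "s \<ge> 0" using r c by (simp add: s_def)
  have "cinner_vec x ((mat w + c *\<^sub>R L) *v x) = of_real ((norm x)^2) * (w + of_real s)"
    using nx by (simp add: Mv cinner_lin cinner_self r s_def field_simps)
  then have "cmod (cinner_vec x ((mat w + c *\<^sub>R L) *v x)) = (norm x)^2 * norm (w + of_real s)"
    by (simp add: norm_mult norm_power)
  then have "(norm x)^2 * norm (w + of_real s) \<le> norm x * norm ((mat w + c *\<^sub>R L) *v x)"
    using cinner_cs by metis
  moreover have "(norm x)^2 * (\<delta> * norm w) \<le> (norm x)^2 * norm (w + of_real s)"
    using wb[OF s] by (simp add: mult_left_mono)
  ultimately have "norm x * (\<delta> * norm w * norm x) \<le> norm x * norm ((mat w + c *\<^sub>R L) *v x)"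
    by (simp add: power2_eq_square algebra_simps)
  then show ?thesis using nx by simp
qed

lemma resolvent_bound:
  fixes L :: "complex^'n^'n"
  assumes sa: "self_adjoint_mat L" and pd: "pos_def_mat L" and c: "c > 0" and d: "\<delta> > 0"
    and w: "w \<noteq> 0"
    and wb: "\<And>s. s \<ge> 0 \<Longrightarrow> \<delta> * norm w \<le> norm (w + of_real s)"
  shows "\<delta> * norm w * norm (matrix_inv (mat w + c *\<^sub>R L) *v v) \<le> norm v"
proof -
  define M where "M = mat w + c *\<^sub>R L"
  have lb: "\<And>x. \<delta> * norm w * norm x \<le> norm (M *v x)"
    unfolding M_def by (rule lower_bound[OF sa pd c d wb])
  have "\<forall>x. M *v x = 0 \<longrightarrow> x = 0"
  proof (intro allI impI)
    fix x assume "M *v x = 0"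
    then have "\<delta> * norm w * norm x \<le> 0" using lb[of x] by simp
    moreover have "\<delta> * norm w > 0" using d w by simp
    ultimately show "x = 0" using d w by (auto simp: mult_le_0_iff)
  qed
  then have "invertible M"
    by (simp add: invertible_left_inverse matrix_left_invertible_ker)
  then have "M ** matrix_inv M = mat 1"
    unfolding invertible_def matrix_inv_def by (rule someI2_ex) auto
  then have "M *v (matrix_inv M *v v) = v" by (simp add: matrix_vector_mul_assoc)
  then show ?thesis using lb[of "matrix_inv M *v v"] unfolding M_def by simp
qed
lemma key: fixes a n :: real assumes "a > 0" "n \<ge> 0"
  shows "a / (1 + a^2 * (n+1)^2) \<le> 2/(1 + a*n) - 2/(1 + a*(n+1))"
proof -
  have e: "2/(1 + a*n) - 2/(1 + a*(n+1)) = 2*a/((1+a*n)*(1+a*(n+1)))"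
  proof -
    have "1 + a*n > 0" "1 + a*(n+1) > 0" using assms by (simp_all add: add_pos_nonneg)
    then show ?thesis by (simp add: field_simps)
  qed
  have p1: "(1+a*n)*(1+a*(n+1)) \<le> 2*(1 + a^2*(n+1)^2)"
  proof -
    have "(1+a*n)*(1+a*(n+1)) \<le> (1+a*(n+1))*(1+a*(n+1))"
      using assms by (intro mult_right_mono) (auto simp: algebra_simps)
    also have "\<dots> \<le> 2*(1 + a^2*(n+1)^2)"
    proof -
      have "2*(1 + a^2*(n+1)^2) - (1+a*(n+1))*(1+a*(n+1)) = (1 - a*(n+1))^2"
        by (simp add: power2_eq_square algebra_simps)
      moreover have "(1 - a*(n+1))^2 \<ge> 0" by simp
      ultimately show ?thesis by linarith
    qed
    finally show ?thesis .
  qed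
  have pos: "(1+a*n)*(1+a*(n+1)) > 0" using assms by (simp add: add_pos_nonneg)
  have "a / (1 + a^2 * (n+1)^2) \<le> 2*a/((1+a*n)*(1+a*(n+1)))"
    using assms p1 pos by (simp add: divide_simps)
  then show ?thesis using e by simp
qed
lemma aux_alg: fixes P d :: real
  assumes "P \<noteq> 0" "d \<noteq> 0"
  shows "(2 * s * r * (E1 * E2) * (P * X)) * (v / (d * P)) = (2 / d) * E1 * (s * (r * X)) * E2 * v"
  using assms by (simp add: field_simps)

lemma norm_smult: "norm (c *s (x::complex^'n)) = cmod c * norm x"
proof -
  have "cmod c * norm x = L2_set (\<lambda>i. cmod c * cmod (x$i)) UNIV"
    unfolding norm_vec_def by (simp add: L2_set_right_distrib)
  then show ?thesis by (simp add: norm_vec_def norm_mult)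
qed

lemma term_bound:
  fixes L :: "complex^'n^'n" and \<gamma> K \<sigma> \<beta> t p :: real
  assumes sa: "self_adjoint_mat L" and pd: "pos_def_mat L"
    and g: "0 < \<gamma>" "\<gamma> < 1" and K: "K > 0" and s: "\<sigma> > 0" and b: "\<beta> \<ge> 1/2" and t: "t > 0"
  shows "norm ((vector_derivative (zc \<sigma>) (at p) * exp (zc \<sigma> p) * zc \<sigma> p powr of_real (\<gamma> - \<beta>)) *s
            (matrix_inv (mat (zc \<sigma> p powr of_real \<gamma>) + (K * t powr \<gamma>) *\<^sub>R L) *v v))
         \<le> (2 / sin (\<gamma> * pi)) * exp \<sigma> * \<sigma> powr (1 - \<beta>) * norm v / (1 + \<sigma> * p^2)"
proof -
  define z where "z = zc \<sigma> p"
  define w where "w = z powr of_real \<gamma>"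
  define \<delta> where "\<delta> = sin (\<gamma> * pi)"
  define q where "q = 1 + p^2"
  have q: "q \<ge> 1" by (simp add: q_def)
  have z: "z \<noteq> 0" using zc_nz[OF s] by (simp add: z_def)
  have d: "\<delta> > 0" using g by (simp add: \<delta>_def sin_gt_zero)
  have nz: "norm z = \<sigma> * q" using s by (simp add: z_def norm_zc q_def)
  have sq: "\<sigma> * q > 0" using s q by simp
  have nw: "norm w = (\<sigma> * q) powr \<gamma>" by (simp add: w_def norm_powr_real_powr' nz)
  have w: "w \<noteq> 0" using nw sq by auto
  have c: "K * t powr \<gamma> > 0" using K t by simp
  have rb: "\<delta> * norm w * norm (matrix_inv (mat w + (K * t powr \<gamma>) *\<^sub>R L) *v v) \<le> norm v"
    by (rule resolvent_bound[OF sa pd c d w]) (use powr_sector[OF z g] in \<open>simp add: w_def \<delta>_def\<close>)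
  define A where "A = cmod (vector_derivative (zc \<sigma>) (at p) * exp z * z powr of_real (\<gamma> - \<beta>))"
  have A: "A = 2 * \<sigma> * sqrt q * exp (\<sigma> * (1 - p^2)) * (\<sigma> * q) powr (\<gamma> - \<beta>)"
    using s by (simp add: A_def norm_mult norm_zc' q_def z_def Re_zc norm_powr_real_powr' nz[unfolded z_def])
  have A0: "A \<ge> 0" by (simp add: A_def)
  have "norm ((vector_derivative (zc \<sigma>) (at p) * exp z * z powr of_real (\<gamma> - \<beta>)) *s
            (matrix_inv (mat w + (K * t powr \<gamma>) *\<^sub>R L) *v v))
        = A * norm (matrix_inv (mat w + (K * t powr \<gamma>) *\<^sub>R L) *v v)"
    by (simp add: norm_smult A_def)
  also have "\<dots> \<le> A * (norm v / (\<delta> * norm w))"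
    using rb d w A0 by (intro mult_left_mono) (simp_all add: field_simps)
  also have "\<dots> = (2 / \<delta>) * exp \<sigma> * (\<sigma> * (sqrt q * (\<sigma> * q) powr (- \<beta>))) * exp (- (\<sigma> * p^2)) * norm v"
  proof -
    have e1: "(\<sigma> * q) powr (\<gamma> - \<beta>) = (\<sigma> * q) powr \<gamma> * (\<sigma> * q) powr (- \<beta>)"
      by (simp add: powr_add[symmetric])
    have e2: "exp (\<sigma> * (1 - p^2)) = exp \<sigma> * exp (- (\<sigma> * p^2))"
      by (simp add: exp_add[symmetric] algebra_simps)
    show ?thesis unfolding A nw e1 e2 by (intro aux_alg) (use d sq in auto)
  qed
  also have "\<dots> \<le> (2 / \<delta>) * exp \<sigma> * \<sigma> powr (1 - \<beta>) * (1 / (1 + \<sigma> * p^2)) * norm v"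
  proof -
    have "sqrt q * (\<sigma> * q) powr (- \<beta>) = \<sigma> powr (- \<beta>) * q powr (1/2 - \<beta>)"
    proof -
      have "(\<sigma> * q) powr (- \<beta>) = \<sigma> powr (- \<beta>) * q powr (- \<beta>)"
        using s q by (simp add: powr_mult)
      moreover have "sqrt q = q powr (1/2)" using q by (simp add: powr_half_sqrt)
      moreover have "q powr (1/2) * q powr (- \<beta>) = q powr (1/2 - \<beta>)"
        by (simp add: powr_add[symmetric])
      ultimately show ?thesis by (simp add: ac_simps)
    qed
    also have "\<dots> \<le> \<sigma> powr (- \<beta>)"
    proof -
      have "q powr (1/2 - \<beta>) = 1 / q powr (\<beta> - 1/2)" using q by (simp add: powr_minus_divide[symmetric])
      also have "\<dots> \<le> 1" using q b ge_one_powr_ge_zero[of q "\<beta> - 1/2"] by simp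
      finally show ?thesis by (simp add: mult_left_le)
    qed
    finally have h0: "sqrt q * (\<sigma> * q) powr (- \<beta>) \<le> \<sigma> powr (- \<beta>)" .
    have h1: "\<sigma> * (sqrt q * (\<sigma> * q) powr (- \<beta>)) \<le> \<sigma> powr (1 - \<beta>)"
    proof -
      have "\<sigma> powr (1 - \<beta>) = \<sigma> * \<sigma> powr (- \<beta>)"
        using s by (simp add: powr_diff powr_minus_divide)
      then show ?thesis using s h0
        by (simp add: mult_left_mono)
    qed
    have h2: "exp (- (\<sigma> * p^2)) \<le> 1 / (1 + \<sigma> * p^2)"
    proof -
      have "1 + \<sigma> * p^2 \<le> exp (\<sigma> * p^2)" by (rule exp_ge_add_one_self)
      moreover have "1 + \<sigma> * p^2 > 0" using s by (simp add: add_pos_nonneg)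
      ultimately show ?thesis by (simp add: exp_minus field_simps)
    qed
    have pos: "0 \<le> (2 / \<delta>) * exp \<sigma>" using d by simp
    have "\<sigma> * (sqrt q * (\<sigma> * q) powr (- \<beta>)) * exp (- (\<sigma> * p^2)) \<le> \<sigma> powr (1 - \<beta>) * (1 / (1 + \<sigma> * p^2))"
      by (rule mult_mono[OF h1 h2]) (auto simp: s less_imp_le)
    then have "(2 / \<delta>) * exp \<sigma> * (\<sigma> * (sqrt q * (\<sigma> * q) powr (- \<beta>)) * exp (- (\<sigma> * p^2)))
       \<le> (2 / \<delta>) * exp \<sigma> * (\<sigma> powr (1 - \<beta>) * (1 / (1 + \<sigma> * p^2)))"
      using pos by (rule mult_left_mono)
    then have "(2 / \<delta>) * exp \<sigma> * (\<sigma> * (sqrt q * (\<sigma> * q) powr (- \<beta>)) * exp (- (\<sigma> * p^2))) * norm v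
       \<le> (2 / \<delta>) * exp \<sigma> * (\<sigma> powr (1 - \<beta>) * (1 / (1 + \<sigma> * p^2))) * norm v"
      by (rule mult_right_mono) simp
    then show ?thesis by (simp add: mult.assoc)
  qed
  finally show ?thesis by (simp add: z_def w_def \<delta>_def)
qed

lemma int_sum_bound:
  fixes a :: real assumes a: "a > 0"
  shows "a * (\<Sum>k\<in>{-int N..int N}. 1 / (1 + a^2 * (real_of_int k)^2)) \<le> a + 4 - 4 / (1 + a * real N)"
proof (induction N)
  case 0 then show ?case by simp
next
  case (Suc N)
  have set: "{-int (Suc N)..int (Suc N)} = insert (-(int N + 1)) (insert (int N + 1) {-int N..int N})"
    by auto
  have fin: "finite {-int N..int N}" by simp
  have sum: "(\<Sum>k\<in>{-int (Suc N)..int (Suc N)}. 1 / (1 + a^2 * (real_of_int k)^2))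
      = 2 * (1 / (1 + a^2 * (real N + 1)^2)) + (\<Sum>k\<in>{-int N..int N}. 1 / (1 + a^2 * (real_of_int k)^2))"
  proof -
    have "(- real N - 1)^2 = (real N + 1)^2" by (simp add: power2_eq_square algebra_simps)
    then show ?thesis unfolding set using fin by simp
  qed
  have k: "a / (1 + a^2 * (real N + 1)^2) \<le> 2/(1 + a * real N) - 2/(1 + a*(real N + 1))"
    by (rule key[OF a]) simp
  have "a * (\<Sum>k\<in>{-int (Suc N)..int (Suc N)}. 1 / (1 + a^2 * (real_of_int k)^2))
      = 2 * (a / (1 + a^2 * (real N + 1)^2)) + a * (\<Sum>k\<in>{-int N..int N}. 1 / (1 + a^2 * (real_of_int k)^2))"
    unfolding sum by (simp add: distrib_left)
  also have "\<dots> \<le> a + 4 - 4 / (1 + a * real (Suc N))"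
  proof -
    have "4 / (1 + a * real (Suc N)) = 2 * (2/(1 + a*(real N + 1)))" by (simp add: add.commute)
    moreover have "4/(1+a*real N) = 2*(2/(1+a*real N))" by simp
    ultimately show ?thesis using k Suc.IH by linarith
  qed
  finally show ?case .
qed

lemma tau_sum_bound:
  fixes \<sigma> \<tau> :: real assumes s: "\<sigma> > 0" and t: "\<tau> > 0" "\<tau> \<le> 1"
  shows "\<tau> * (\<Sum>k\<in>{-int N..int N}. 1 / (1 + \<sigma> * (real_of_int k * \<tau>)^2)) \<le> 1 + 4 / sqrt \<sigma>"
proof -
  define a where "a = sqrt \<sigma> * \<tau>"
  have a: "a > 0" using s t by (simp add: a_def)
  have ss: "sqrt \<sigma> > 0" using s by simp
  have eq: "\<And>k. \<sigma> * (real_of_int k * \<tau>)^2 = a^2 * (real_of_int k)^2"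
    using s by (simp add: a_def power_mult_distrib)
  have "\<tau> * (\<Sum>k\<in>{-int N..int N}. 1 / (1 + \<sigma> * (real_of_int k * \<tau>)^2))
      = (a * (\<Sum>k\<in>{-int N..int N}. 1 / (1 + a^2 * (real_of_int k)^2))) / sqrt \<sigma>"
    using ss by (simp add: eq a_def)
  also have "\<dots> \<le> (a + 4) / sqrt \<sigma>"
  proof -
    have "4 / (1 + a * real N) \<ge> 0" using a by simp
    then have "a * (\<Sum>k\<in>{-int N..int N}. 1 / (1 + a^2 * (real_of_int k)^2)) \<le> a + 4"
      using int_sum_bound[OF a, of N] by linarith
    then show ?thesis using ss by (intro divide_right_mono) auto
  qed
  also have "\<dots> = \<tau> + 4 / sqrt \<sigma>" using ss by (simp add: a_def add_divide_distrib)
  finally show ?thesis using t by simp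
qed

theorem lemma8:
  fixes L :: "complex^'n^'n" and \<gamma> K \<sigma> \<beta> :: real
  assumes "self_adjoint_mat L" and "pos_def_mat L"
    and "0 < \<gamma>" and "\<gamma> < 1" and "K > 0" and "\<sigma> > 0" and "\<beta> \<ge> 1/2"
  shows "\<exists>C. \<forall>t \<tau>1 (N1::nat) (v::complex^'n).
           t > 0 \<longrightarrow> \<tau>1 > 0 \<longrightarrow> \<tau>1 \<le> 1 \<longrightarrow> N1 \<ge> 1 \<longrightarrow>
           norm (Pi_op \<gamma> K L t \<sigma> \<tau>1 N1 \<beta> v)
             \<le> C * (t powr (\<beta> - 1) / (2 * pi) * exp \<sigma> * \<sigma> powr (1 - \<beta>) * norm v)"
proof (intro exI allI impI)
  fix t \<tau>1 :: real and N1 :: nat and v :: "complex^'n"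
  assume t: "t > 0" and tau: "\<tau>1 > 0" "\<tau>1 \<le> 1" and "N1 \<ge> 1"
  define D where "D = (2 / sin (\<gamma> * pi)) * exp \<sigma> * \<sigma> powr (1 - \<beta>) * norm v"
  define T where "T = (\<lambda>k::int. (let p = real_of_int k * \<tau>1; z = zc \<sigma> p; z' = vector_derivative (zc \<sigma>) (at p)
         in (z' * exp z * z powr (of_real (\<gamma> - \<beta>))) *s
            (matrix_inv (mat (z powr of_real \<gamma>) + (K * t powr \<gamma>) *\<^sub>R L) *v v)))"
  have Tb: "norm (T k) \<le> D * (1 / (1 + \<sigma> * (real_of_int k * \<tau>1)^2))" for k
    unfolding T_def Let_def D_def
    using term_bound[OF assms t, of "real_of_int k * \<tau>1" v] by simp
  have c0: "cmod (of_real (t powr (\<beta> - 1) * \<tau>1) / (2 * of_real pi * \<i>)) = t powr (\<beta> - 1) * \<tau>1 / (2 * pi)"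
    using t tau by (simp add: norm_divide norm_mult)
  have D0: "D \<ge> 0" using assms by (simp add: D_def sin_ge_zero)
  have "norm (Pi_op \<gamma> K L t \<sigma> \<tau>1 N1 \<beta> v) = t powr (\<beta> - 1) * \<tau>1 / (2 * pi) * norm (\<Sum>k\<in>{-int N1..int N1}. T k)"
    unfolding Pi_op_def T_def norm_smult c0 ..
  also have "\<dots> \<le> t powr (\<beta> - 1) * \<tau>1 / (2 * pi) * (\<Sum>k\<in>{-int N1..int N1}. D * (1 / (1 + \<sigma> * (real_of_int k * \<tau>1)^2)))"
  proof (rule mult_left_mono)
    show "norm (\<Sum>k\<in>{-int N1..int N1}. T k) \<le> (\<Sum>k\<in>{-int N1..int N1}. D * (1 / (1 + \<sigma> * (real_of_int k * \<tau>1)^2)))"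
      by (rule order_trans[OF norm_sum sum_mono]) (rule Tb)
  qed (use t tau in simp)
  also have "\<dots> = t powr (\<beta> - 1) / (2 * pi) * D * (\<tau>1 * (\<Sum>k\<in>{-int N1..int N1}. 1 / (1 + \<sigma> * (real_of_int k * \<tau>1)^2)))"
  proof -
    define S where "S = (\<Sum>k\<in>{-int N1..int N1}. 1 / (1 + \<sigma> * (real_of_int k * \<tau>1)^2))"
    have "(\<Sum>k\<in>{-int N1..int N1}. D * (1 / (1 + \<sigma> * (real_of_int k * \<tau>1)^2))) = D * S"
      unfolding S_def by (rule sum_distrib_left[symmetric])
    then show ?thesis unfolding S_def[symmetric] by simp
  qed
  also have "\<dots> \<le> t powr (\<beta> - 1) / (2 * pi) * D * (1 + 4 / sqrt \<sigma>)"
    using tau_sum_bound[OF \<open>\<sigma> > 0\<close> tau, of N1] D0 t by (intro mult_left_mono) auto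
  also have "\<dots> = ((2 / sin (\<gamma> * pi)) * (1 + 4 / sqrt \<sigma>)) * (t powr (\<beta> - 1) / (2 * pi) * exp \<sigma> * \<sigma> powr (1 - \<beta>) * norm v)"
  proof -
    have "sin (\<gamma> * pi) > 0" using assms by (intro sin_gt_zero) auto
    then show ?thesis by (simp add: D_def field_simps)
  qed
  finally show "norm (Pi_op \<gamma> K L t \<sigma> \<tau>1 N1 \<beta> v)
             \<le> ((2 / sin (\<gamma> * pi)) * (1 + 4 / sqrt \<sigma>)) * (t powr (\<beta> - 1) / (2 * pi) * exp \<sigma> * \<sigma> powr (1 - \<beta>) * norm v)" .
qed
end
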